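(* Let $\alpha>d$ and $\kappa\ge0$ be integers with $\alpha>d-\kappa$, and let $\delta_\varepsilon=\varepsilon^{\frac{2\kappa+2\alpha}{2\kappa+2\alpha+d}}$. There is $a>0$ such that for all $M>1$, all $\varepsilon>0$ and all $F\in\mathrm{span}\{\Psi_{\mathcal O}\}$ with $\|F\|_{H^{\alpha-d/2}(\mathbb R^d)}\le M\delta_\varepsilon/\varepsilon$, there is a decomposition $F=F_1+F_2$ with $F_1,F_2\in\mathrm{span}\{\Psi_{\mathcal O}\}$, $\|F_1\|_{(H^\kappa(\mathbb R^d))^*}\le\delta_\varepsilon^3/\varepsilon^2$ and $\|F_2\|_{B^\alpha_{11}(\mathbb R^d)}\le aM^2\delta_\varepsilon^2/\varepsilon^2$.
   Context: $\mathcal O\subset\mathbb R^d$ nonempty bounded open with smooth boundary. $\Psi$ is an orthonormal basis of $L^2(\mathbb R^d)$ of compactly supported Daubechies wavelets of regularity $S>\alpha$; $\Psi_{\mathcal O}=\{\psi_{kl}:k\ge1,1\le l\le L_k\}$ are those whose supports meet $\mathcal O$, $L_k\simeq2^{dk}$; $\mathrm{span}\{\Psi_{\mathcal O}\}$ consists of $F=\sum_{k,l}F_{kl}\psi_{kl}$, $F_{kl}=\langle F,\psi_{kl}\rangle$. For such $F$ the norms are given by the wavelet characterisation $\|F\|_{B^s_{pq}(\mathbb R^d)}=\big(\sum_k2^{qk(s+d/2-d/p)}(\sum_l|F_{kl}|^p)^{q/p}\big)^{1/q}$; in particular $\|F\|^2_{H^{\alpha-d/2}(\mathbb R^d)}=\sum_k2^{(2\alpha-d)k}\sum_lF_{kl}^2$,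 $\|F\|^2_{(H^\kappa(\mathbb R^d))^*}=\|F\|^2_{H^{-\kappa}(\mathbb R^d)}=\sum_k2^{-2\kappa k}\sum_lF_{kl}^2$ and $\|F\|_{B^\alpha_{11}(\mathbb R^d)}=\sum_k2^{(\alpha-d/2)k}\sum_l|F_{kl}|$. *)

theory Defs
  imports "HOL-Analysis.Analysis"
begin

text \<open>Elements of span{Psi_O} are represented by their wavelet coefficient arrays
  F k l (= F_kl), indexed by levels k >= 1 and positions 1 <= l <= L k, vanishing
  outside this index range and square summable (membership in L2).\<close>

definition in_span :: "(nat \<Rightarrow> nat) \<Rightarrow> (nat \<Rightarrow> nat \<Rightarrow> real) \<Rightarrow> bool" where
  "in_span L F \<longleftrightarrow>
     (\<forall>k l. (k = 0 \<or> l = 0 \<or> L k < l) \<longrightarrow> F k l = 0) \<and>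
     (\<Sum>k. ennreal (\<Sum>l\<in>{1..L k}. (F k l)^2)) < \<infinity>"

definition H_norm_sq :: "(nat \<Rightarrow> nat) \<Rightarrow> real \<Rightarrow> (nat \<Rightarrow> nat \<Rightarrow> real) \<Rightarrow> ennreal" where
  "H_norm_sq L s F = (\<Sum>k. ennreal (2 powr (2 * s * real k) * (\<Sum>l\<in>{1..L k}. (F k l)^2)))"

definition B11_norm :: "(nat \<Rightarrow> nat) \<Rightarrow> nat \<Rightarrow> real \<Rightarrow> (nat \<Rightarrow> nat \<Rightarrow> real) \<Rightarrow> ennreal" where
  "B11_norm L d s F = (\<Sum>k. ennreal (2 powr ((s - real d / 2) * real k) * (\<Sum>l\<in>{1..L k}. \<bar>F k l\<bar>)))"

end

theory Submission
  imports Defs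
begin

lemma cs_abs:
  fixes x :: "nat \<Rightarrow> real"
  shows "(\<Sum>l\<in>I. \<bar>x l\<bar>) \<le> sqrt (real (card I) * (\<Sum>l\<in>I. (x l)^2))"
proof -
  have "(\<Sum>l\<in>I. 1 * \<bar>x l\<bar>)^2 \<le> (\<Sum>l\<in>I. (1::real)^2) * (\<Sum>l\<in>I. \<bar>x l\<bar>^2)"
    by (rule Cauchy_Schwarz_ineq_sum)
  then have "(\<Sum>l\<in>I. \<bar>x l\<bar>)^2 \<le> real (card I) * (\<Sum>l\<in>I. (x l)^2)" by simp
  then show ?thesis by (rule real_le_rsqrt)
qed

lemma ennreal_term_le:
  "ennreal (f k) \<le> (\<Sum>i. ennreal (f i))"
proof -
  have "(\<Sum>i\<in>{k}. ennreal (f i)) \<le> (\<Sum>i. ennreal (f i))"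
    by (rule sum_le_suminf[OF summableI]) auto
  then show ?thesis by simp
qed

lemma ennreal_suminf_mono:
  "(\<And>k. f k \<le> g k) \<Longrightarrow> (\<Sum>k. f k :: ennreal) \<le> (\<Sum>k. g k)"
  by (rule suminf_le) (auto intro: summableI)

lemma geom_bound:
  fixes r :: real and S :: "nat set"
  assumes r: "r > 1" and S: "finite S" "S \<noteq> {}"
  shows "(\<Sum>k\<in>S. r^k) \<le> r / (r - 1) * r ^ Max S"
proof -
  let ?K = "Max S"
  have "(\<Sum>k\<in>S. r^k) \<le> (\<Sum>k<Suc ?K. r^k)"
    apply (rule sum_mono2) using S r by (auto simp: less_Suc_eq_le)
  also have "\<dots> = (1 - r^Suc ?K) / (1 - r)" using r by (subst sum_gp_strict) simp
  also have "\<dots> = (r^Suc ?K - 1) / (r - 1)" by (metis minus_diff_eq minus_divide_divide)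
  also have "\<dots> \<le> r^Suc ?K / (r - 1)" using r by (simp add: divide_right_mono)
  also have "\<dots> = r / (r - 1) * r ^ ?K" by simp
  finally show ?thesis .
qed

lemma exp_ineq:
  fixes M \<epsilon> p \<theta> :: real
  assumes M: "M > 1" and e: "\<epsilon> > 0" and th: "0 \<le> \<theta>" "\<theta> \<le> 1"
    and rel: "\<theta> * (1 - 2*p) = p - 1"
  shows "(M * \<epsilon> powr p / \<epsilon>) * (M * \<epsilon> / (\<epsilon> powr p)^2) powr \<theta>
         \<le> M^2 * (\<epsilon> powr p)^2 / \<epsilon>^2"
proof -
  have sq: "(\<epsilon> powr p)^2 = \<epsilon> powr (2*p)"
    by (simp add: power2_eq_square powr_add[symmetric])
  have e1: "M * \<epsilon> powr p / \<epsilon> = M * \<epsilon> powr (p - 1)" using e by (simp add: powr_diff)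
  have e2: "M * \<epsilon> / (\<epsilon> powr p)^2 = M * \<epsilon> powr (1 - 2*p)"
    using e by (simp add: sq powr_diff)
  have e3: "(M * \<epsilon> powr (1 - 2*p)) powr \<theta> = M powr \<theta> * \<epsilon> powr (p - 1)"
    using M e rel by (simp add: powr_mult powr_powr mult.commute)
  have e4: "M^2 * (\<epsilon> powr p)^2 / \<epsilon>^2 = M^2 * (\<epsilon> powr (p - 1))^2"
    using e by (simp add: powr_diff power_divide)
  have "M * M powr \<theta> \<le> M^2"
  proof -
    have "M powr \<theta> \<le> M powr 1" using M th by (intro powr_mono) auto
    then have "M * M powr \<theta> \<le> M * M" using M by simp
    then show ?thesis by (simp add: power2_eq_square)
  qed
  then have "M * M powr \<theta> * (\<epsilon> powr (p - 1))^2 \<le> M^2 * (\<epsilon> powr (p - 1))^2"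
    by (intro mult_right_mono) auto
  then show ?thesis unfolding e1 e2 e3 e4 by (simp add: power2_eq_square algebra_simps)
qed

theorem lemmaB3:
  fixes d \<alpha> \<kappa> :: nat and L :: "nat \<Rightarrow> nat"
  assumes d_pos: "d \<ge> 1"
    and alpha_gt: "\<alpha> > d"
    and alpha_kappa: "int \<alpha> > int d - int \<kappa>"
    and L_size: "\<exists>c1 c2. c1 > 0 \<and> c2 > 0 \<and>
        (\<forall>k\<ge>1. c1 * 2 ^ (d * k) \<le> real (L k) \<and> real (L k) \<le> c2 * 2 ^ (d * k))"
  shows "\<exists>a>0. \<forall>M \<epsilon> F. M > 1 \<longrightarrow> \<epsilon> > 0 \<longrightarrow> in_span L F \<longrightarrow>
     (let \<delta> = \<epsilon> powr ((2 * real \<kappa> + 2 * real \<alpha>) / (2 * real \<kappa> + 2 * real \<alpha> + real d)) in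
      H_norm_sq L (real \<alpha> - real d / 2) F \<le> ennreal ((M * \<delta> / \<epsilon>)^2) \<longrightarrow>
      (\<exists>F1 F2. in_span L F1 \<and> in_span L F2 \<and> (\<forall>k l. F k l = F1 k l + F2 k l) \<and>
         H_norm_sq L (- real \<kappa>) F1 \<le> ennreal ((\<delta>^3 / \<epsilon>^2)^2) \<and>
         B11_norm L d (real \<alpha>) F2 \<le> ennreal (a * M^2 * \<delta>^2 / \<epsilon>^2)))"
proof -
  obtain c1 c2 :: real where c2: "c2 > 0" and Lb: "\<And>k. k \<ge> 1 \<Longrightarrow> real (L k) \<le> c2 * 2 ^ (d * k)"
    using L_size by blast
  define A :: real where "A = (2 * real \<kappa> + 2 * real \<alpha> - real d) / 2"
  define \<theta> :: real where "\<theta> = real d / (2 * A)"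
  define r :: real where "r = 2 powr (real d / 2)"
  define a :: real where "a = sqrt c2 * (r / (r - 1))"
  have A_gt: "A > real d / 2" using alpha_gt unfolding A_def by simp
  have A_pos: "A > 0" using A_gt by simp
  have r_gt: "r > 1" using d_pos unfolding r_def by simp
  have a_pos: "a > 0" using c2 r_gt unfolding a_def by simp
  have th0: "0 \<le> \<theta>" using A_pos unfolding \<theta>_def by simp
  have th1: "\<theta> \<le> 1" using A_pos alpha_gt unfolding \<theta>_def A_def by (simp add: field_simps)
  show ?thesis
  proof (intro exI[of _ a] conjI allI impI a_pos)
    fix M \<epsilon> :: real and F :: "nat \<Rightarrow> nat \<Rightarrow> real"
    assume M: "M > 1" and e: "\<epsilon> > 0" and Fs: "in_span L F"
    define p where "p = (2 * real \<kappa> + 2 * real \<alpha>) / (2 * real \<kappa> + 2 * real \<alpha> + real d)"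
    define \<delta> where "\<delta> = \<epsilon> powr p"
    have rel: "\<theta> * (1 - 2*p) = p - 1"
    proof -
      define x :: real where "x = 2 * real \<kappa> + 2 * real \<alpha>"
      have x1: "x - real d > 0" using A_pos unfolding A_def x_def by simp
      have x2: "x + real d > 0" using x1 d_pos by simp
      have "2 * A = x - real d" unfolding A_def x_def by simp
      then have th_eq: "\<theta> = real d / (x - real d)" unfolding \<theta>_def by simp
      have p_eq: "p = x / (x + real d)" unfolding p_def x_def by simp
      have x3: "x * x - real d * real d \<noteq> 0"
        using mult_pos_pos[OF x1 x2] by (simp add: algebra_simps)
      show ?thesis unfolding th_eq p_eq using x1 x2 x3 by (simp add: field_simps)
    qed
    have dpos: "\<delta> > 0" using e unfolding \<delta>_def by simp
    show "let \<delta> = \<epsilon> powr ((2 * real \<kappa> + 2 * real \<alpha>) / (2 * real \<kappa> + 2 * real \<alpha> + real d)) in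
      H_norm_sq L (real \<alpha> - real d / 2) F \<le> ennreal ((M * \<delta> / \<epsilon>)^2) \<longrightarrow>
      (\<exists>F1 F2. in_span L F1 \<and> in_span L F2 \<and> (\<forall>k l. F k l = F1 k l + F2 k l) \<and>
         H_norm_sq L (- real \<kappa>) F1 \<le> ennreal ((\<delta>^3 / \<epsilon>^2)^2) \<and>
         B11_norm L d (real \<alpha>) F2 \<le> ennreal (a * M^2 * \<delta>^2 / \<epsilon>^2))"
      unfolding Let_def p_def[symmetric] \<delta>_def[symmetric]
    proof
      define R where "R = M * \<delta> / \<epsilon>"
      define T where "T = M * \<epsilon> / \<delta>^2"
      have R_pos: "R > 0" and T_pos: "T > 0" using M e dpos unfolding R_def T_def by auto
      assume H: "H_norm_sq L (real \<alpha> - real d / 2) F \<le> ennreal ((M * \<delta> / \<epsilon>)^2)"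
      define Sk where "Sk k = (\<Sum>l\<in>{1..L k}. (F k l)^2)" for k
      have Sk_nn: "Sk k \<ge> 0" for k unfolding Sk_def by (simp add: sum_nonneg)
      have Sk_le: "2 powr (2 * (real \<alpha> - real d / 2) * real k) * Sk k \<le> R^2" for k
      proof -
        have "ennreal (2 powr (2 * (real \<alpha> - real d / 2) * real k) * Sk k) \<le> ennreal (R^2)"
          using ennreal_term_le[of "\<lambda>k. 2 powr (2 * (real \<alpha> - real d / 2) * real k) * Sk k" k] H
          unfolding H_norm_sq_def Sk_def R_def by (rule order_trans)
        then show ?thesis by simp
      qed
      define F1 where "F1 k l = (if T \<le> 2 powr (A * real k) then F k l else 0)" for k l
      define F2 where "F2 k l = (if T \<le> 2 powr (A * real k) then 0 else F k l)" for k l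
      have F0: "F k l = 0" if "k = 0 \<or> l = 0 \<or> L k < l" for k l
        using Fs that unfolding in_span_def by blast
      have Ffin: "(\<Sum>k. ennreal (\<Sum>l\<in>{1..L k}. (F k l)^2)) < \<infinity>"
        using Fs unfolding in_span_def by blast
      have span_sub: "in_span L G" if G: "\<And>k l. G k l = F k l \<or> G k l = 0" for G
        unfolding in_span_def
      proof (intro conjI allI impI)
        fix k l assume "k = 0 \<or> l = 0 \<or> L k < l"
        then show "G k l = 0" using G[of k l] F0 by auto
      next
        have "(\<Sum>k. ennreal (\<Sum>l\<in>{1..L k}. (G k l)^2)) \<le> (\<Sum>k. ennreal (\<Sum>l\<in>{1..L k}. (F k l)^2))"
          apply (rule ennreal_suminf_mono, rule ennreal_leI, rule sum_mono)
          using G by (metis order_refl zero_le_power2 power_zero_numeral)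
        then show "(\<Sum>k. ennreal (\<Sum>l\<in>{1..L k}. (G k l)^2)) < \<infinity>" using Ffin by simp
      qed
      have s1: "in_span L F1" by (rule span_sub) (simp add: F1_def)
      have s2: "in_span L F2" by (rule span_sub) (simp add: F2_def)
      have dec: "\<forall>k l. F k l = F1 k l + F2 k l" by (simp add: F1_def F2_def)
      have RT: "R / T = \<delta>^3 / \<epsilon>^2" using M e dpos unfolding R_def T_def
        by (simp add: field_simps power2_eq_square power3_eq_cube)
      have h1: "2 powr (2 * (- real \<kappa>) * real k) * (\<Sum>l\<in>{1..L k}. (F1 k l)^2)
               \<le> (1 / T^2) * (2 powr (2 * (real \<alpha> - real d / 2) * real k) * Sk k)" for k
      proof (cases "T \<le> 2 powr (A * real k)")
        case True
        have eq: "2 powr (2 * (- real \<kappa>) * real k)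
             = 2 powr (2 * (real \<alpha> - real d / 2) * real k) / (2 powr (A * real k))^2"
          unfolding A_def by (simp add: power2_eq_square powr_add[symmetric] powr_diff[symmetric] algebra_simps)
        have "1 / (2 powr (A * real k))^2 \<le> 1 / T^2"
          using True T_pos by (intro divide_left_mono power_mono) auto
        then have "2 powr (2 * (- real \<kappa>) * real k) \<le> (1 / T^2) * 2 powr (2 * (real \<alpha> - real d / 2) * real k)"
        proof -
          have "2 powr (2 * (real \<alpha> - real d / 2) * real k) * (1 / (2 powr (A * real k))^2)
                \<le> 2 powr (2 * (real \<alpha> - real d / 2) * real k) * (1 / T^2)"
            using \<open>1 / (2 powr (A * real k))^2 \<le> 1 / T^2\<close> by (intro mult_left_mono) auto
          then show ?thesis unfolding eq by (simp add: mult.commute)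
        qed
        from mult_right_mono[OF this Sk_nn[of k]]
        show ?thesis using True unfolding F1_def Sk_def by (simp add: mult.assoc)
      next
        case False
        then show ?thesis using Sk_nn[of k] T_pos unfolding F1_def by simp
      qed
      have "H_norm_sq L (- real \<kappa>) F1
            \<le> (\<Sum>k. ennreal (1 / T^2) * ennreal (2 powr (2 * (real \<alpha> - real d / 2) * real k) * Sk k))"
        unfolding H_norm_sq_def
      proof (rule ennreal_suminf_mono)
        fix k
        have eqm: "ennreal (1 / T^2) * ennreal (2 powr (2 * (real \<alpha> - real d / 2) * real k) * Sk k)
              = ennreal (1 / T^2 * (2 powr (2 * (real \<alpha> - real d / 2) * real k) * Sk k))"
          by (rule ennreal_mult[symmetric]) (auto simp: Sk_nn)
        show "ennreal (2 powr (2 * (- real \<kappa>) * real k) * (\<Sum>l\<in>{1..L k}. (F1 k l)^2))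
              \<le> ennreal (1 / T^2) * ennreal (2 powr (2 * (real \<alpha> - real d / 2) * real k) * Sk k)"
          unfolding eqm by (rule ennreal_leI[OF h1])
      qed
      also have "\<dots> = ennreal (1 / T^2) * H_norm_sq L (real \<alpha> - real d / 2) F"
        unfolding H_norm_sq_def Sk_def by simp
      also have "\<dots> \<le> ennreal (1 / T^2) * ennreal (R^2)"
        using H unfolding R_def by (rule mult_left_mono) simp
      also have "\<dots> = ennreal ((R / T)^2)"
        by (simp add: ennreal_mult[symmetric] power_divide)
      finally have P1: "H_norm_sq L (- real \<kappa>) F1 \<le> ennreal ((\<delta>^3 / \<epsilon>^2)^2)" unfolding RT .
      define S where "S = {k. 1 \<le> k \<and> 2 powr (A * real k) < T}"
      have S_fin: "finite S"
      proof -
        have H: "k < T / (A * ln 2)" if "k \<in> S" for k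
        proof -
          have "A * real k * ln 2 \<le> exp (A * real k * ln 2)"
            using exp_ge_add_one_self[of "A * real k * ln 2"] by linarith
          also have "\<dots> = 2 powr (A * real k)" by (simp add: powr_def)
          also have "\<dots> < T" using that unfolding S_def by simp
          finally show ?thesis using A_pos by (simp add: field_simps)
        qed
        have "S \<subseteq> {..nat \<lceil>T / (A * ln 2)\<rceil>}"
        proof (intro subsetI)
          fix k assume "k \<in> S"
          have "real k \<le> real (nat \<lceil>T / (A * ln 2)\<rceil>)"
            using H[OF \<open>k \<in> S\<close>] real_nat_ceiling_ge[of "T / (A * ln 2)"] by linarith
          then show "k \<in> {..nat \<lceil>T / (A * ln 2)\<rceil>}" by simp
        qed
        then show ?thesis by (rule finite_subset) simp
      qed
      define g where "g k = (if k \<in> S then sqrt c2 * R * r^k else 0)" for k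
      have h2: "2 powr ((real \<alpha> - real d / 2) * real k) * (\<Sum>l\<in>{1..L k}. \<bar>F2 k l\<bar>) \<le> g k" for k
      proof (cases "k \<in> S")
        case True
        then have k1: "k \<ge> 1" and kT: "\<not> T \<le> 2 powr (A * real k)" unfolding S_def by auto
        have "(\<Sum>l\<in>{1..L k}. \<bar>F2 k l\<bar>) = (\<Sum>l\<in>{1..L k}. \<bar>F k l\<bar>)" using kT by (simp add: F2_def)
        also have "\<dots> \<le> sqrt (real (L k) * Sk k)" unfolding Sk_def using cs_abs[of "F k" "{1..L k}"] by simp
        also have "\<dots> \<le> sqrt c2 * R * 2 powr (- (real \<alpha> - real d) * real k)"
        proof (rule real_le_lsqrt)
          show "0 \<le> sqrt c2 * R * 2 powr (- (real \<alpha> - real d) * real k)" using R_pos c2 by simp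
          have Qp: "2 powr (2 * (real \<alpha> - real d / 2) * real k) > 0" by simp
          have "Sk k \<le> R^2 / 2 powr (2 * (real \<alpha> - real d / 2) * real k)"
            using Sk_le[of k] Qp by (simp add: pos_le_divide_eq mult.commute)
          also have "\<dots> = R^2 * 2 powr (- (2 * (real \<alpha> - real d / 2) * real k))"
            by (simp only: powr_minus divide_inverse)
          also have "\<dots> = R^2 * 2 powr (- 2 * (real \<alpha> - real d / 2) * real k)"
            by (simp add: algebra_simps)
          finally have Sk2: "Sk k \<le> R^2 * 2 powr (- 2 * (real \<alpha> - real d / 2) * real k)" .
          have "real (L k) * Sk k \<le> (c2 * 2 ^ (d * k)) * (R^2 * 2 powr (- 2 * (real \<alpha> - real d / 2) * real k))"
            using Lb[OF k1] Sk2 Sk_nn[of k] c2 by (intro mult_mono) auto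
          also have "\<dots> = (sqrt c2 * R * 2 powr (- (real \<alpha> - real d) * real k))^2"
            using c2 by (simp add: power_mult_distrib power2_eq_square powr_realpow[symmetric] powr_add[symmetric] algebra_simps)
          finally show "real (L k) * Sk k \<le> (sqrt c2 * R * 2 powr (- (real \<alpha> - real d) * real k))^2" .
        qed
        finally have X: "(\<Sum>l\<in>{1..L k}. \<bar>F2 k l\<bar>) \<le> sqrt c2 * R * 2 powr (- (real \<alpha> - real d) * real k)" .
        have "2 powr ((real \<alpha> - real d / 2) * real k) * (\<Sum>l\<in>{1..L k}. \<bar>F2 k l\<bar>)
              \<le> 2 powr ((real \<alpha> - real d / 2) * real k) * (sqrt c2 * R * 2 powr (- (real \<alpha> - real d) * real k))"
          using X by (intro mult_left_mono) auto
        also have "\<dots> = sqrt c2 * R * r^k"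
          unfolding r_def by (simp add: powr_realpow[symmetric] powr_powr powr_add[symmetric] algebra_simps)
        finally show ?thesis using True unfolding g_def by simp
      next
        case False
        have "F2 k l = 0" for l
        proof (cases "k = 0")
          case True then show ?thesis using F0 unfolding F2_def by simp
        next
          case False
          then show ?thesis using \<open>k \<notin> S\<close> unfolding F2_def S_def by auto
        qed
        then show ?thesis using False unfolding g_def by simp
      qed
      have "B11_norm L d (real \<alpha>) F2 \<le> (\<Sum>k. ennreal (g k))"
        unfolding B11_norm_def by (rule ennreal_suminf_mono, rule ennreal_leI, rule h2)
      also have "\<dots> = (\<Sum>k\<in>S. ennreal (g k))"
        by (rule suminf_finite[OF S_fin]) (simp add: g_def)
      also have "\<dots> = ennreal (\<Sum>k\<in>S. g k)"
        using R_pos c2 r_gt by (intro sum_ennreal) (auto simp: g_def)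
      also have "\<dots> \<le> ennreal (a * M^2 * \<delta>^2 / \<epsilon>^2)"
      proof (rule ennreal_leI)
        have gs: "(\<Sum>k\<in>S. g k) = sqrt c2 * R * (\<Sum>k\<in>S. r^k)"
          unfolding g_def by (simp add: sum_distrib_left)
        show "(\<Sum>k\<in>S. g k) \<le> a * M^2 * \<delta>^2 / \<epsilon>^2"
        proof (cases "S = {}")
          case True then show ?thesis using a_pos dpos e M by (simp add: g_def)
        next
          case False
          define K where "K = Max S"
          have KS: "K \<in> S" using S_fin False unfolding K_def by simp
          have "r^K = (2 powr (A * real K)) powr \<theta>"
            unfolding r_def \<theta>_def using A_pos by (simp add: powr_realpow[symmetric] powr_powr mult.commute)
          also have "\<dots> \<le> T powr \<theta>"
            using KS th0 unfolding S_def by (intro powr_mono2) auto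
          finally have rK: "r^K \<le> T powr \<theta>" .
          have "(\<Sum>k\<in>S. r^k) \<le> r / (r - 1) * T powr \<theta>"
            using geom_bound[OF r_gt S_fin False] rK r_gt unfolding K_def[symmetric]
            by (smt (verit) divide_pos_pos mult_left_mono)
          then have "(\<Sum>k\<in>S. g k) \<le> sqrt c2 * R * (r / (r - 1) * T powr \<theta>)"
            unfolding gs using R_pos c2 by (intro mult_left_mono) auto
          also have "\<dots> = a * (R * T powr \<theta>)" unfolding a_def by (simp add: algebra_simps)
          also have "\<dots> \<le> a * (M^2 * \<delta>^2 / \<epsilon>^2)"
            using exp_ineq[OF M e th0 th1 rel] a_pos unfolding R_def T_def \<delta>_def
            by (intro mult_left_mono) auto
          finally show ?thesis by simp
        qed
      qed
      finally have P2: "B11_norm L d (real \<alpha>) F2 \<le> ennreal (a * M^2 * \<delta>^2 / \<epsilon>^2)" .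
      show "\<exists>F1 F2. in_span L F1 \<and> in_span L F2 \<and> (\<forall>k l. F k l = F1 k l + F2 k l) \<and>
         H_norm_sq L (- real \<kappa>) F1 \<le> ennreal ((\<delta>^3 / \<epsilon>^2)^2) \<and>
         B11_norm L d (real \<alpha>) F2 \<le> ennreal (a * M^2 * \<delta>^2 / \<epsilon>^2)"
        using s1 s2 dec P1 P2 by blast
    qed
  qed
qed

end
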